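(* Let $G=(V,E,C,\ell)$ be an edge-labeled graph with exactly two categories $C=\{c_1,c_2\}$. Construct an undirected weighted graph $G'$ on node set $V'=V\cup\{s,t\}$, where $s=v_{c_1}$ and $t=v_{c_2}$ are two new terminal nodes, as follows: for each edge $\{i,j\}\in E$ with label $c=\ell(\{i,j\})$, add the three edges $\{i,j\}$, $\{v_c,i\}$, $\{v_c,j\}$, each of weight $\tfrac12$; weights of repeated edges are added. For $T\subseteq V'$ let $\mathrm{cut}(T)$ denote the total weight of edges of $G'$ with one endpoint in $T$ and the other in $V'\setminus T$. Then for every $S\subseteq V$, \[ \mathrm{cut}(S\cup\{s\})=\mathrm{CatEdgeClus}(Y_S), \] where $Y_S:V\to C$ is the clustering with $Y_S[i]=c_1$ for $i\in S$ and $Y_S[i]=c_2$ for $i\in V\setminus S$.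
   Context: An edge-labeled graph $G=(V,E,C,\ell)$ consists of a finite node set $V$, a finite collection $E$ of edges (2-element subsets of $V$), a finite set $C$ of categories, and a labeling $\ell:E\to C$. A (categorical) clustering is a map $Y:V\to C$. For $e\in E$, the mistake function is $m_Y(e)=1$ if $Y[i]\neq \ell(e)$ for some node $i\in e$, and $m_Y(e)=0$ otherwise. The Categorical Edge Clustering objective is $\mathrm{CatEdgeClus}(Y)=\sum_{e\in E} m_Y(e)$. *)

theory Defs
  imports Complex_Main "HOL-Library.Multiset"
begin

text \<open>Edge-labeled graph: node set V, finite edge index set E (allowing repeated
 edges), endpoint map ends (each edge a 2-element subset of V), labelling lab.\<close>

definition mistake :: "('v \<Rightarrow> 'c) \<Rightarrow> ('e \<Rightarrow> 'v set) \<Rightarrow> ('e \<Rightarrow> 'c) \<Rightarrow> 'e \<Rightarrow> nat" where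
  "mistake Y ends lab e = (if \<exists>i\<in>ends e. Y i \<noteq> lab e then 1 else 0)"

definition CatEdgeClus :: "'e set \<Rightarrow> ('e \<Rightarrow> 'v set) \<Rightarrow> ('e \<Rightarrow> 'c) \<Rightarrow> ('v \<Rightarrow> 'c) \<Rightarrow> nat" where
  "CatEdgeClus E ends lab Y = (\<Sum>e\<in>E. mistake Y ends lab e)"

datatype ('v, 'c) node = Orig 'v | Term 'c

definition aux_edges :: "'e set \<Rightarrow> ('e \<Rightarrow> 'v set) \<Rightarrow> ('e \<Rightarrow> 'c) \<Rightarrow> ('v, 'c) node set multiset" where
  "aux_edges E ends lab =
     (\<Sum>e\<in>E. {# Orig ` ends e #} + image_mset (\<lambda>i. {Term (lab e), Orig i}) (mset_set (ends e)))"

definition aux_weight :: "'e set \<Rightarrow> ('e \<Rightarrow> 'v set) \<Rightarrow> ('e \<Rightarrow> 'c) \<Rightarrow> ('v, 'c) node set \<Rightarrow> real" where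
  "aux_weight E ends lab p = (1/2) * real (count (aux_edges E ends lab) p)"

definition aux_cut :: "('v, 'c) node set \<Rightarrow> 'e set \<Rightarrow> ('e \<Rightarrow> 'v set) \<Rightarrow> ('e \<Rightarrow> 'c) \<Rightarrow> ('v, 'c) node set \<Rightarrow> real" where
  "aux_cut V' E ends lab T = (\<Sum>p\<in>{{x, y} | x y. x \<in> T \<and> y \<in> V' - T}. aux_weight E ends lab p)"

end

theory Submission
  imports Defs
begin

lemma card2_ends: "card A = 2 \<Longrightarrow> \<exists>a b. a \<noteq> b \<and> A = {a, b}"
  by (metis card_2_iff)

theorem mainTheorem1:
  fixes V :: "'v set" and E :: "'e set" and ends :: "'e \<Rightarrow> 'v set"
    and lab :: "'e \<Rightarrow> 'c" and c1 c2 :: 'c and S :: "'v set"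
  assumes "finite V" and "finite E"
    and "\<forall>e\<in>E. ends e \<subseteq> V \<and> card (ends e) = 2"
    and "c1 \<noteq> c2"
    and "\<forall>e\<in>E. lab e \<in> {c1, c2}"
    and "S \<subseteq> V"
  shows "aux_cut (Orig ` V \<union> {Term c1, Term c2}) E ends lab (Orig ` S \<union> {Term c1})
         = real (CatEdgeClus E ends lab (\<lambda>i. if i \<in> S then c1 else c2))"
proof -
  define V' where "V' = Orig ` V \<union> {Term c1, Term c2}"
  define T where "T = Orig ` S \<union> {Term c1}"
  define P where "P = {{x, y} | x y. x \<in> T \<and> y \<in> V' - T}"
  define M where "M = (\<lambda>e. {# Orig ` ends e #} + image_mset (\<lambda>i. {Term (lab e), Orig i}) (mset_set (ends e)))"
  define Y where "Y = (\<lambda>i. if i \<in> S then c1 else c2)"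
  have finV': "finite V'" using assms(1) by (simp add: V'_def)
  have "P \<subseteq> (\<lambda>(x,y). {x,y}) ` (V' \<times> V')" unfolding P_def T_def V'_def using assms(6) by auto
  hence finP: "finite P" using finV' by (meson finite_SigmaI finite_imageI finite_subset)
  have memP: "{x,y} \<in> P \<longleftrightarrow> ((x \<in> T) \<noteq> (y \<in> T))" if "x \<in> V'" "y \<in> V'" for x y
  proof
    assume "{x,y} \<in> P"
    then obtain u w where "{x,y} = {u,w}" "u \<in> T" "w \<in> V' - T" unfolding P_def by blast
    thus "(x \<in> T) \<noteq> (y \<in> T)" by (auto simp: doubleton_eq_iff)
  next
    assume "(x \<in> T) \<noteq> (y \<in> T)"
    thus "{x,y} \<in> P" unfolding P_def using that by (cases "x \<in> T") (auto simp: insert_commute)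
  qed
  have edge: "(\<Sum>p\<in>P. real (count (M e) p)) / 2 = real (mistake Y ends lab e)" if e: "e \<in> E" for e
  proof -
    obtain a b where ab: "a \<noteq> b" "ends e = {a,b}" using card2_ends assms(3) e by blast
    have abV: "a \<in> V" "b \<in> V" using assms(3) e ab by auto
    have lc: "lab e = c1 \<or> lab e = c2" using assms(5) e by auto
    have Me: "M e = {# {Orig a, Orig b}, {Term (lab e), Orig a}, {Term (lab e), Orig b} #}"
      unfolding M_def using ab by (simp add: add_mset_commute)
    have cnt: "real (count (M e) p) = (if {Orig a, Orig b} = p then 1 else 0) + (if {Term (lab e), Orig a} = p then 1 else 0) + (if {Term (lab e), Orig b} = p then 1 else 0)" for p
      unfolding Me by auto
    have "(\<Sum>p\<in>P. real (count (M e) p)) = (if {Orig a, Orig b} \<in> P then 1 else 0) + (if {Term (lab e), Orig a} \<in> P then 1 else 0) + (if {Term (lab e), Orig b} \<in> P then 1 else 0)"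
      unfolding cnt using finP by (simp add: sum.distrib)
    also have "\<dots> = (if (a \<in> S) \<noteq> (b \<in> S) then 1 else 0) + (if (lab e = c1) \<noteq> (a \<in> S) then 1 else 0) + (if (lab e = c1) \<noteq> (b \<in> S) then 1 else 0)"
    proof -
      have inV: "Orig a \<in> V'" "Orig b \<in> V'" "Term (lab e) \<in> V'" using abV lc by (auto simp: V'_def)
      have inT: "(Orig a \<in> T) = (a \<in> S)" "(Orig b \<in> T) = (b \<in> S)" "(Term (lab e) \<in> T) = (lab e = c1)"
        unfolding T_def by auto
      show ?thesis using memP[OF inV(1) inV(2)] memP[OF inV(3) inV(1)] memP[OF inV(3) inV(2)] inT by simp
    qed
    finally show ?thesis unfolding mistake_def Y_def ab using lc assms(4) by auto
  qed
  have "aux_cut V' E ends lab T = (\<Sum>p\<in>P. (\<Sum>e\<in>E. real (count (M e) p)) / 2)"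
    unfolding aux_cut_def aux_weight_def aux_edges_def P_def[symmetric] M_def[symmetric]
    by (simp add: count_sum)
  also have "\<dots> = (\<Sum>e\<in>E. (\<Sum>p\<in>P. real (count (M e) p)) / 2)"
    by (simp add: sum_divide_distrib[symmetric] sum.swap[of _ P E])
  also have "\<dots> = (\<Sum>e\<in>E. real (mistake Y ends lab e))" using edge by simp
  finally show ?thesis unfolding CatEdgeClus_def V'_def T_def Y_def by simp
qed

end
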